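(* Let $r \ge 3$ and $n \ge 2r^5$. Let $\mathcal{H}$ be an intersecting $r$-uniform $n$-vertex hypergraph with $\delta_{r-1}^+(\mathcal{H}) \ge 3$ having the maximum number of hyperedges among all intersecting $r$-uniform $n$-vertex hypergraphs with minimum positive co-degree at least $3$. Then $\mathcal{H}$ is a $3$-kernel system.
   Context: A hypergraph is intersecting if every two of its hyperedges share at least one vertex. For a non-empty $r$-uniform hypergraph $\mathcal{H}$, the minimum positive co-degree $\delta_{r-1}^+(\mathcal{H})$ is the largest integer $k$ such that every $(r-1)$-set of vertices that is contained in at least one hyperedge of $\mathcal{H}$ is contained in at least $k$ distinct hyperedges of $\mathcal{H}$; for the empty hypergraph it is $0$. Given integers $r \ge k \ge 1$, an $r$-uniform $k$-kernel system on vertex set $V$ is a hypergraph whose hyperedge set is $\{E \in \binom{V}{r} : |E \cap X| \ge k\}$ for some set $X \subseteq V$ with $|X| = 2k-1$. *)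

theory Defs
  imports Main
begin

definition uniform_hypergraph :: "'a set \<Rightarrow> nat \<Rightarrow> 'a set set \<Rightarrow> bool" where
  "uniform_hypergraph V r H \<longleftrightarrow> (\<forall>E\<in>H. E \<subseteq> V \<and> card E = r)"

definition intersecting :: "'a set set \<Rightarrow> bool" where
  "intersecting H \<longleftrightarrow> (\<forall>E\<in>H. \<forall>F\<in>H. E \<inter> F \<noteq> {})"

definition min_pos_codegree :: "nat \<Rightarrow> 'a set set \<Rightarrow> nat" where
  "min_pos_codegree r H =
     (if H = {} then 0
      else (GREATEST k. \<forall>S. card S = r - 1 \<and> (\<exists>E\<in>H. S \<subseteq> E)
                 \<longrightarrow> card {E\<in>H. S \<subseteq> E} \<ge> k))"

definition kernel_system :: "'a set \<Rightarrow> nat \<Rightarrow> nat \<Rightarrow> 'a set set \<Rightarrow> bool" where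
  "kernel_system V r k H \<longleftrightarrow>
     (\<exists>X. X \<subseteq> V \<and> card X = 2 * k - 1 \<and>
          H = {E. E \<subseteq> V \<and> card E = r \<and> card (E \<inter> X) \<ge> k})"

end

theory Submission
  imports Defs
begin


lemma card_UN_le_mult:
  assumes "finite I" "\<And>i. i \<in> I \<Longrightarrow> card (A i) \<le> b"
  shows "card (\<Union>i\<in>I. A i) \<le> card I * b"
proof -
  have "card (\<Union>i\<in>I. A i) \<le> (\<Sum>i\<in>I. card (A i))" by (rule card_UN_le[OF assms(1)])
  also have "\<dots> \<le> card I * b" using sum_bounded_above[of I "\<lambda>i. card (A i)" b] assms(2) by simp
  finally show ?thesis .
qed

lemma supersets_card_le:
  assumes "finite V"
  shows "card {E. E \<subseteq> V \<and> card E = k \<and> T \<subseteq> E} \<le> (card V - card T) choose (k - card T)"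
proof (cases "T \<subseteq> V")
  case False
  then have e: "{E. E \<subseteq> V \<and> card E = k \<and> T \<subseteq> E} = {}" by blast
  show ?thesis unfolding e by simp
next
  case True
  have fT: "finite T" using True assms finite_subset by blast
  have sub: "{E. E \<subseteq> V \<and> card E = k \<and> T \<subseteq> E} \<subseteq> (\<lambda>B. B \<union> T) ` {B. B \<subseteq> V - T \<and> card B = k - card T}"
  proof
    fix E assume E: "E \<in> {E. E \<subseteq> V \<and> card E = k \<and> T \<subseteq> E}"
    then have fE: "finite E" using assms finite_subset by blast
    have "E = (E - T) \<union> T" using E by blast
    moreover have "card (E - T) = k - card T" using E fE fT by (simp add: card_Diff_subset)
    moreover have "E - T \<subseteq> V - T" using E by blast
    ultimately show "E \<in> (\<lambda>B. B \<union> T) ` {B. B \<subseteq> V - T \<and> card B = k - card T}" by blast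
  qed
  have "card {E. E \<subseteq> V \<and> card E = k \<and> T \<subseteq> E} \<le> card ((\<lambda>B. B \<union> T) ` {B. B \<subseteq> V - T \<and> card B = k - card T})"
  proof (rule card_mono[OF _ sub])
    have "finite {B. B \<subseteq> V - T \<and> card B = k - card T}"
      by (rule finite_subset[of _ "Pow (V - T)"]) (use assms in auto)
    then show "finite ((\<lambda>B. B \<union> T) ` {B. B \<subseteq> V - T \<and> card B = k - card T})" by simp
  qed
  also have "\<dots> \<le> card {B. B \<subseteq> V - T \<and> card B = k - card T}"
    by (rule card_image_le, rule finite_subset[of _ "Pow (V - T)"]) (use assms in auto)
  also have "\<dots> = card (V - T) choose (k - card T)" by (rule n_subsets) (use assms in simp)
  also have "card (V - T) = card V - card T" using True fT by (simp add: card_Diff_subset)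
  finally show ?thesis .
qed

lemma un_not: "x \<in> A \<union> B \<Longrightarrow> x \<notin> A \<Longrightarrow> x \<in> B" by blast
lemma ins_not: "x \<in> insert a S \<Longrightarrow> x \<noteq> a \<Longrightarrow> x \<in> S" by blast

lemma card_insert_le1: "finite A \<Longrightarrow> card (insert x A) \<le> card A + 1"
  by (simp add: card_insert_if)



lemma choose_shift: "Suc k * (m choose Suc k) = (m - k) * (m choose k)"
  by (metis binomial_absorption binomial_absorb_comp)

lemma arith_main:
  fixes r n :: nat
  assumes r3: "r \<ge> 3" and nb: "n \<ge> 2 * r ^ 5"
  shows "((n - 3) choose (r - 3)) + 3 * r ^ 4 * (if r \<ge> 4 then (n - 3) choose (r - 4) else 0) < 10 * ((n - 5) choose (r - 3))"
proof (cases "r = 3")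
  case True
  then show ?thesis by simp
next
  case False
  define j where "j = r - 4"
  have rj: "r = j + 4" using r3 False by (simp add: j_def)
  define p where "p = n - 5"
  have r5: "r ^ 5 \<ge> r" using r3 by (simp add: self_le_power)
  have p_big: "p + 5 = n" "p \<ge> 2 * r ^ 5 - 5" using nb r5 r3 by (auto simp: p_def)
  have n3: "n - 3 = Suc (Suc p)" using p_big by simp
  have Mb: "(if r \<ge> 4 then (n - 3) choose (r - 4) else 0) = Suc (Suc p) choose j" using rj n3 by simp
  have N: "(n - 5) choose (r - 3) = p choose Suc j" using rj by (simp add: p_def)
  have c3: "(n - 3) choose (r - 3) = Suc (Suc p) choose Suc j" using rj n3 by simp
  have dec: "Suc (Suc p) choose Suc j = (Suc p choose j) + (p choose j) + (p choose Suc j)"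
    by simp
  have m1: "Suc p choose j \<le> Suc (Suc p) choose j" by (rule binomial_right_mono) simp
  have m2: "p choose j \<le> Suc (Suc p) choose j" by (rule binomial_right_mono) simp
  let ?M = "Suc (Suc p) choose j" and ?N = "p choose Suc j" and ?C = "Suc (Suc p) choose Suc j"
  have c3le: "?C \<le> ?N + 2 * ?M" using dec m1 m2 by linarith
  have sh: "Suc j * ?C = (Suc (Suc p) - j) * ?M" by (rule choose_shift)
  have r54: "r ^ 5 = r * r ^ 4" by (simp add: eval_nat_numeral)
  have "(4::nat) ^ 4 \<le> r ^ 4" using rj by (intro power_mono) auto
  then have r5b: "r ^ 5 \<ge> 256 * r" using r54 by simp
  have pb: "p + 5 \<ge> 2 * r ^ 5" using p_big nb by simp
  have jp: "j + 3 * j + 10 \<le> p" using pb r5b rj by linarith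
  have key: "?M * (p - 3 * j) \<le> Suc j * ?N"
  proof -
    have "?M * (p - 3 * j) + ?M * (2 * Suc j) = (Suc (Suc p) - j) * ?M"
    proof -
      have "p - 3 * j + 2 * Suc j = Suc (Suc p) - j" using jp by simp
      then show ?thesis by (metis add_mult_distrib2 mult.commute)
    qed
    also have "\<dots> = Suc j * ?C" using sh by simp
    also have "\<dots> \<le> Suc j * (?N + 2 * ?M)" by (rule mult_le_mono2[OF c3le])
    finally show ?thesis by (simp add: algebra_simps)
  qed
  have Npos: "?N > 0" using jp by simp
  have big: "(2 + 3 * r ^ 4) * Suc j < 9 * (p - 3 * j)"
  proof -
    have "(2 + 3 * r ^ 4) * Suc j \<le> (2 + 3 * r ^ 4) * r" by (rule mult_le_mono2) (use rj in simp)
    also have "\<dots> = 2 * r + 3 * r ^ 5" using r54 by (simp add: algebra_simps)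
    also have "\<dots> < 9 * (p - 3 * j)" using pb r5b rj jp by linarith
    finally show ?thesis .
  qed
  have "(2 + 3 * r ^ 4) * ?M * (p - 3 * j) \<le> (2 + 3 * r ^ 4) * Suc j * ?N"
    using key by (metis mult.assoc mult_le_mono2)
  also have "\<dots> < 9 * (p - 3 * j) * ?N" by (rule mult_less_mono1[OF big Npos])
  finally have "(2 + 3 * r ^ 4) * ?M < 9 * ?N"
    by (metis mult.commute mult.left_commute mult_less_cancel1)
  have eq: "(2 + 3 * r ^ 4) * ?M = 2 * ?M + 3 * r ^ 4 * ?M" by (simp add: algebra_simps)
  have aux: "\<And>C N M X. C \<le> N + 2 * M \<Longrightarrow> 2 * M + X < 9 * N \<Longrightarrow> C + X < 10 * (N::nat)" by linarith
  have fin: "?C + 3 * r ^ 4 * ?M < 10 * ?N"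
    by (rule aux[OF c3le]) (use eq \<open>(2 + 3 * r ^ 4) * ?M < 9 * ?N\<close> in simp)
  show ?thesis using fin by (simp only: c3 N Mb)
qed


locale hg =
  fixes V :: "'a set" and H :: "'a set set" and r n :: nat
  assumes finV: "finite V" and cardV: "card V = n"
    and unif: "\<forall>E\<in>H. E \<subseteq> V \<and> card E = r"
    and inter: "\<forall>E\<in>H. \<forall>F\<in>H. E \<inter> F \<noteq> {}"
    and codeg: "\<And>S E. E \<in> H \<Longrightarrow> S \<subseteq> E \<Longrightarrow> card S = r - 1 \<Longrightarrow> 3 \<le> card {x. x \<notin> S \<and> insert x S \<in> H}"
    and r3: "r \<ge> 3"
    and Hne: "H \<noteq> {}"
begin

definition cover :: "'a set \<Rightarrow> bool" where "cover W \<longleftrightarrow> (\<forall>E\<in>H. E \<inter> W \<noteq> {})"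
definition star :: "'a set \<Rightarrow> 'a set set" where "star T = {E\<in>H. T \<subseteq> E}"
definition Mb :: nat where "Mb = (if r \<ge> 4 then (n - 3) choose (r - 4) else 0)"

lemma edgeV: "E \<in> H \<Longrightarrow> E \<subseteq> V" using unif by blast
lemma edgecard: "E \<in> H \<Longrightarrow> card E = r" using unif by blast
lemma edgefin: "E \<in> H \<Longrightarrow> finite E" using edgeV finV finite_subset by blast
lemma finH: "finite H"
  by (rule finite_subset[of _ "Pow V"]) (use edgeV finV in auto)

lemma codeg_cover:
  assumes "cover W" "finite W" "E \<in> H" "S \<subseteq> E" "card S = r - 1" "S \<inter> W = {}"
  shows "{x. x \<notin> S \<and> insert x S \<in> H} \<subseteq> W" "3 \<le> card {x. x \<notin> S \<and> insert x S \<in> H}"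
    "3 \<le> card W"
proof -
  show sub: "{x. x \<notin> S \<and> insert x S \<in> H} \<subseteq> W"
  proof
    fix x assume "x \<in> {x. x \<notin> S \<and> insert x S \<in> H}"
    then have "insert x S \<inter> W \<noteq> {}" using assms(1) unfolding cover_def by blast
    then show "x \<in> W" using assms(6) by blast
  qed
  show c: "3 \<le> card {x. x \<notin> S \<and> insert x S \<in> H}" using codeg assms by blast
  show "3 \<le> card W" using card_mono[OF assms(2) sub] c by linarith
qed

lemma one_elem:
  assumes "cover W" "finite W" "card W \<le> 2" "E \<in> H" "E \<inter> W = {a}"
  shows False
proof -
  have aE: "a \<in> E" using assms(5) by blast
  have "card (E - {a}) = r - 1" using aE edgecard[OF assms(4)] edgefin[OF assms(4)] by simp
  moreover have "(E - {a}) \<inter> W = {}" using assms(5) by blast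
  ultimately have "3 \<le> card W" using codeg_cover(3)[OF assms(1,2,4), of "E - {a}"] by blast
  then show False using assms(3) by simp
qed

lemma no_small_cover:
  assumes "cover W" "finite W" "card W \<le> 2"
  shows False
proof -
  obtain E where E: "E \<in> H" using Hne by blast
  then obtain a where a: "a \<in> E \<inter> W" using assms(1) unfolding cover_def by blast
  show False
  proof (cases "E \<inter> W = {a}")
    case True
    then show False using one_elem[OF assms E] by blast
  next
    case False
    then obtain b where b: "b \<in> E \<inter> W" "b \<noteq> a" using a by blast
    have W: "W = {a, b}"
    proof -
      have "{a, b} \<subseteq> W" using a b by blast
      moreover have "card {a, b} = 2" using b by simp
      ultimately show ?thesis using assms(2,3) by (metis card_seteq)
    qed
    have cov: "cover {a}" unfolding cover_def
    proof
      fix F assume F: "F \<in> H"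
      have "F \<inter> W \<noteq> {}" using F assms(1) unfolding cover_def by blast
      moreover have "F \<inter> W \<noteq> {b}" using one_elem[OF assms F] by blast
      ultimately show "F \<inter> {a} \<noteq> {}" using W by blast
    qed
    have "E \<inter> {a} = {a}" using a by blast
    then show False using one_elem[OF cov _ _ E] by simp
  qed
qed

lemma star_card3: "card T = 3 \<Longrightarrow> card (star T) \<le> (n - 3) choose (r - 3)"
proof -
  assume T: "card T = 3"
  have "star T \<subseteq> {E. E \<subseteq> V \<and> card E = r \<and> T \<subseteq> E}" unfolding star_def using unif by blast
  then have "card (star T) \<le> card {E. E \<subseteq> V \<and> card E = r \<and> T \<subseteq> E}"
    by (rule card_mono[rotated]) (rule finite_subset[of _ "Pow V"], use finV in auto)
  also have "\<dots> \<le> (n - 3) choose (r - 3)" using supersets_card_le[OF finV, of r T] T cardV by simp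
  finally show ?thesis .
qed

lemma star_card4: "card T = 4 \<Longrightarrow> card (star T) \<le> Mb"
proof -
  assume T: "card T = 4"
  show ?thesis
  proof (cases "r \<ge> 4")
    case False
    have "star T = {}"
    proof (rule ccontr)
      assume "star T \<noteq> {}"
      then obtain E where "E \<in> H" "T \<subseteq> E" unfolding star_def by blast
      then have "card T \<le> r" using card_mono edgefin edgecard by metis
      then show False using T False by simp
    qed
    then show ?thesis by simp
  next
    case True
    have "star T \<subseteq> {E. E \<subseteq> V \<and> card E = r \<and> T \<subseteq> E}" unfolding star_def using unif by blast
    then have "card (star T) \<le> card {E. E \<subseteq> V \<and> card E = r \<and> T \<subseteq> E}"
      by (rule card_mono[rotated]) (rule finite_subset[of _ "Pow V"], use finV in auto)
    also have "\<dots> \<le> (n - 4) choose (r - 4)" using supersets_card_le[OF finV, of r T] T cardV by simp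
    also have "\<dots> \<le> (n - 3) choose (r - 4)" by (rule binomial_right_mono) simp
    finally show ?thesis using True by (simp add: Mb_def)
  qed
qed

lemma not_cover_small:
  assumes "finite T" "card T \<le> 3" "\<not>(\<exists>U. cover U \<and> card U = 3)"
  shows "\<exists>F\<in>H. F \<inter> T = {}"
proof -
  have "\<not> cover T"
  proof (cases "card T \<le> 2")
    case True then show ?thesis using no_small_cover assms(1) by blast
  next
    case False then have "card T = 3" using assms(2) by simp
    then show ?thesis using assms(3) by blast
  qed
  then show ?thesis unfolding cover_def by blast
qed

lemma tau4:
  assumes "\<not>(\<exists>U. cover U \<and> card U = 3)"
  shows "card H \<le> r ^ 4 * Mb"
proof -
  have "\<forall>T. \<exists>F. finite T \<and> card T \<le> 3 \<longrightarrow> F \<in> H \<and> F \<inter> T = {}"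
    using not_cover_small[OF _ _ assms] by blast
  then obtain G where G0: "\<forall>T. finite T \<and> card T \<le> 3 \<longrightarrow> G T \<in> H \<and> G T \<inter> T = {}"
    using choice[of "\<lambda>T F. finite T \<and> card T \<le> 3 \<longrightarrow> F \<in> H \<and> F \<inter> T = {}"] by blast
  have G: "G T \<in> H" "G T \<inter> T = {}" if "finite T" "card T \<le> 3" for T using G0 that by blast+
  have c1: "card {y1} \<le> 3" for y1 :: 'a by simp
  have c2a: "card {y1, y2} \<le> 2" for y1 y2 :: 'a using card_insert_le1[of "{y2}" y1] by simp
  have c2: "card {y1, y2} \<le> 3" for y1 y2 :: 'a using c2a[of y1 y2] by simp
  have c3: "card {y1, y2, y3} \<le> 3" for y1 y2 y3 :: 'a using card_insert_le1[of "{y2, y3}" y1] c2a[of y2 y3] by simp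
  have cG: "card (G T) = r" "finite (G T)" if "finite T" "card T \<le> 3" for T
    using G[OF that] edgecard edgefin by blast+
  define Sx where "Sx = (\<Union>y1\<in>G {}. \<Union>y2\<in>G {y1}. \<Union>y3\<in>G {y1,y2}. \<Union>y4\<in>G {y1,y2,y3}. star {y1,y2,y3,y4})"
  have HS: "H \<subseteq> Sx"
  proof
    fix E assume E: "E \<in> H"
    obtain y1 where y1: "y1 \<in> E" "y1 \<in> G {}" using inter E G[of "{}"] by fastforce
    obtain y2 where y2: "y2 \<in> E" "y2 \<in> G {y1}" using inter E G[of "{y1}"] c1 by fastforce
    obtain y3 where y3: "y3 \<in> E" "y3 \<in> G {y1,y2}" using inter E G[of "{y1,y2}"] c2 by fastforce
    obtain y4 where y4: "y4 \<in> E" "y4 \<in> G {y1,y2,y3}" using inter E G[of "{y1,y2,y3}"] c3 by fastforce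
    have "E \<in> star {y1,y2,y3,y4}" unfolding star_def using E y1 y2 y3 y4 by blast
    then show "E \<in> Sx" unfolding Sx_def using y1 y2 y3 y4 by blast
  qed
  have L4: "card (\<Union>y4\<in>G {y1,y2,y3}. star {y1,y2,y3,y4}) \<le> r * Mb"
    if "y2 \<in> G {y1}" "y3 \<in> G {y1,y2}" for y1 y2 y3
  proof -
    have "card (\<Union>y4\<in>G {y1,y2,y3}. star {y1,y2,y3,y4}) \<le> card (G {y1,y2,y3}) * Mb"
    proof (rule card_UN_le_mult)
      show "finite (G {y1, y2, y3})" using cG c3 by simp
      fix y4 assume y4: "y4 \<in> G {y1,y2,y3}"
      have d: "y2 \<noteq> y1" "y3 \<notin> {y1,y2}" "y4 \<notin> {y1,y2,y3}"
        using G(2)[of "{y1}"] G(2)[of "{y1,y2}"] G(2)[of "{y1,y2,y3}"] c1 c2 c3 that y4 by auto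
      then have "card {y1,y2,y3,y4} = 4" by auto
      then show "card (star {y1,y2,y3,y4}) \<le> Mb" by (rule star_card4)
    qed
    then show ?thesis using cG c3 by simp
  qed
  have L3: "card (\<Union>y3\<in>G {y1,y2}. \<Union>y4\<in>G {y1,y2,y3}. star {y1,y2,y3,y4}) \<le> r * (r * Mb)"
    if "y2 \<in> G {y1}" for y1 y2
  proof -
    have "card (\<Union>y3\<in>G {y1,y2}. \<Union>y4\<in>G {y1,y2,y3}. star {y1,y2,y3,y4}) \<le> card (G {y1,y2}) * (r * Mb)"
      by (rule card_UN_le_mult) (use cG c2 L4 that in auto)
    then show ?thesis using cG c2 by simp
  qed
  have L2: "card (\<Union>y2\<in>G {y1}. \<Union>y3\<in>G {y1,y2}. \<Union>y4\<in>G {y1,y2,y3}. star {y1,y2,y3,y4}) \<le> r * (r * (r * Mb))"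
    for y1
  proof -
    have "card (\<Union>y2\<in>G {y1}. \<Union>y3\<in>G {y1,y2}. \<Union>y4\<in>G {y1,y2,y3}. star {y1,y2,y3,y4}) \<le> card (G {y1}) * (r * (r * Mb))"
      by (rule card_UN_le_mult) (use cG c1 L3 in auto)
    then show ?thesis using cG c1 by simp
  qed
  have "card Sx \<le> card (G {}) * (r * (r * (r * Mb)))" unfolding Sx_def
    by (rule card_UN_le_mult) (use cG L2 in auto)
  then have cS: "card Sx \<le> r ^ 4 * Mb" using cG[of "{}"] by (simp add: eval_nat_numeral algebra_simps)
  have "finite Sx" unfolding Sx_def star_def by (rule finite_subset[OF _ finH]) blast
  then show ?thesis using card_mono[OF _ HS] cS by linarith
qed

end

locale hg3 = hg +
  fixes U :: "'a set"
  assumes coverU: "cover U" and cardU: "card U = 3"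
begin

definition RR :: "'a set set" where "RR = {R. R \<inter> U = {} \<and> (\<forall>u\<in>U. insert u R \<in> H)}"

lemma finU: "finite U" using cardU card.infinite by fastforce

lemma abc: obtains a b c where "U = {a, b, c}" "a \<noteq> b" "b \<noteq> c" "a \<noteq> c"
  using cardU by (metis card_3_iff)

lemma UV: "U \<subseteq> V"
proof (rule ccontr)
  assume "\<not> U \<subseteq> V"
  then obtain u where u: "u \<in> U" "u \<notin> V" by blast
  have "cover (U - {u})" using coverU edgeV u unfolding cover_def by blast
  moreover have "card (U - {u}) \<le> 2" using u cardU finU by simp
  ultimately show False using no_small_cover finU by blast
qed

lemma C_lemma:
  assumes E: "E \<in> H" and Eu: "E \<inter> U = {u}"
  shows "E - {u} \<in> RR"
proof -
  have uE: "u \<in> E" "u \<in> U" using Eu by blast+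
  have cS: "card (E - {u}) = r - 1" using uE edgecard[OF E] edgefin[OF E] by simp
  have dS: "(E - {u}) \<inter> U = {}" using Eu by blast
  have sub: "{x. x \<notin> E - {u} \<and> insert x (E - {u}) \<in> H} \<subseteq> U"
    and c: "3 \<le> card {x. x \<notin> E - {u} \<and> insert x (E - {u}) \<in> H}"
    using codeg_cover[OF coverU finU E _ cS dS] by blast+
  have "{x. x \<notin> E - {u} \<and> insert x (E - {u}) \<in> H} = U"
    using card_seteq[OF finU sub] c cardU by simp
  then show ?thesis unfolding RR_def using dS by blast
qed

lemma RR_props:
  assumes "R \<in> RR"
  shows "R \<subseteq> V" "finite R" "card R = r - 1" "R \<inter> U = {}"
proof -
  obtain a b c where "U = {a, b, c}" by (rule abc)
  then have aU: "a \<in> U" by blast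
  have E: "insert a R \<in> H" and d: "R \<inter> U = {}" using assms aU unfolding RR_def by blast+
  show "R \<subseteq> V" using edgeV[OF E] by blast
  show fR: "finite R" using edgefin[OF E] by simp
  have "a \<notin> R" using d aU by blast
  then show "card R = r - 1" using edgecard[OF E] fR by simp
  show "R \<inter> U = {}" by (rule d)
qed

lemma RR_inter:
  assumes "R \<in> RR" "R' \<in> RR"
  shows "R \<inter> R' \<noteq> {}"
proof -
  obtain a b c where abcU: "U = {a, b, c}" "a \<noteq> b" by (rule abc)
  have E: "insert a R \<in> H" "insert b R' \<in> H" using assms abcU unfolding RR_def by blast+
  have "insert a R \<inter> insert b R' \<noteq> {}" using inter E by blast
  moreover have "a \<notin> R'" "b \<notin> R" using RR_props(4)[OF assms(1)] RR_props(4)[OF assms(2)] abcU by blast+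
  ultimately show ?thesis using abcU(2) by blast
qed

lemma finRR: "finite RR"
  by (rule finite_subset[of _ "Pow V"]) (use RR_props(1) finV in auto)

lemma H2_lemma:
  assumes E: "E \<in> H" and c2: "card (E \<inter> U) = 2"
  shows "\<exists>x. x \<notin> E - U \<and> insert x (E - U) \<in> RR"
proof -
  have "E \<inter> U \<noteq> {}" using c2 by auto
  then obtain a where a: "a \<in> E" "a \<in> U" by blast
  define Q where "Q = E - U"
  have fE: "finite E" by (rule edgefin[OF E])
  have cQ: "card Q = r - 2" unfolding Q_def using card_Diff_subset_Int[of E U] fE c2 edgecard[OF E] by simp
  have fQ: "finite Q" unfolding Q_def using fE by simp
  have aQ: "a \<notin> Q" unfolding Q_def using a by blast
  define S where "S = insert a Q"
  have cS: "card S = r - 1" unfolding S_def using cQ aQ fQ r3 by simp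
  have SE: "S \<subseteq> E" unfolding S_def Q_def using a by blast
  have X3: "3 \<le> card {x. x \<notin> S \<and> insert x S \<in> H}" using codeg[OF E SE cS] .
  have "\<not> {x. x \<notin> S \<and> insert x S \<in> H} \<subseteq> U - {a}"
  proof
    assume sub: "{x. x \<notin> S \<and> insert x S \<in> H} \<subseteq> U - {a}"
    have "card (U - {a}) = 2" using a cardU finU by simp
    then show False using card_mono[OF _ sub] finU X3 by simp
  qed
  then obtain x where x: "x \<notin> S" "insert x S \<in> H" "x \<notin> U - {a}" by blast
  have xa: "x \<noteq> a" using x(1) unfolding S_def by blast
  then have xU: "x \<notin> U" using x(3) by blast
  have "insert x S \<inter> U = {a}" unfolding S_def Q_def using xU a by blast
  then have "insert x S - {a} \<in> RR" by (rule C_lemma[OF x(2)])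
  moreover have "insert x S - {a} = insert x Q" unfolding S_def using xa aQ by blast
  ultimately have "insert x Q \<in> RR" by simp
  moreover have "x \<notin> Q" using x(1) unfolding S_def by blast
  ultimately show ?thesis unfolding Q_def by blast
qed

lemma iii:
  assumes R: "R \<in> RR" and y: "y \<in> R" and R': "R' \<in> RR" and dis: "(R - {y}) \<inter> R' = {}"
  shows "\<exists>x. x \<notin> R \<and> insert x (R - {y}) \<in> RR \<and> x \<noteq> z"
proof (rule ccontr)
  assume neg: "\<not> ?thesis"
  obtain a b c where abcU: "U = {a, b, c}" "a \<noteq> b" "b \<noteq> c" "a \<noteq> c" by (rule abc)
  have RU: "R \<inter> U = {}" "finite R" "card R = r - 1" using RR_props[OF R] by blast+
  have R'U: "R' \<inter> U = {}" using RR_props[OF R'] by blast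
  have aR: "a \<notin> R" using RU abcU by blast
  define S where "S = insert a (R - {y})"
  have cS: "card S = r - 1" unfolding S_def using RU aR y r3 by simp
  have EaR: "insert a R \<in> H" using R abcU unfolding RR_def by blast
  have SE: "S \<subseteq> insert a R" unfolding S_def by blast
  have X3: "3 \<le> card {x. x \<notin> S \<and> insert x S \<in> H}" using codeg[OF EaR SE cS] .
  have Xsub: "{x. x \<notin> S \<and> insert x S \<in> H} \<subseteq> {y, z}"
  proof
    fix x assume "x \<in> {x. x \<notin> S \<and> insert x S \<in> H}"
    then have x: "x \<notin> S" "insert x S \<in> H" by blast+
    have xa: "x \<noteq> a" using x(1) unfolding S_def by blast
    show "x \<in> {y, z}"
    proof (cases "x \<in> U")
      case True
      obtain u' where u': "u' \<in> U" "u' \<noteq> a" "u' \<noteq> x" using True abcU xa by blast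
      have E2: "insert u' R' \<in> H" using R' u' unfolding RR_def by blast
      have "insert x S \<inter> insert u' R' \<noteq> {}" using inter x(2) E2 by blast
      moreover have "u' \<notin> R" "x \<notin> R'" "a \<notin> R'" using RU R'U u' True abcU by blast+
      ultimately have False using dis u' unfolding S_def by blast
      then show ?thesis by blast
    next
      case False
      show ?thesis
      proof (cases "x = y")
        case True then show ?thesis by blast
      next
        case xy: False
        have xR: "x \<notin> R" using x(1) xy unfolding S_def by blast
        have "insert x S \<inter> U = {a}" unfolding S_def using False RU abcU by blast
        then have "insert x S - {a} \<in> RR" by (rule C_lemma[OF x(2)])
        moreover have "insert x S - {a} = insert x (R - {y})" unfolding S_def using xa aR by blast
        ultimately have "insert x (R - {y}) \<in> RR" by simp
        then have "x = z" using neg xR by blast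
        then show ?thesis by blast
      qed
    qed
  qed
  have "card {x. x \<notin> S \<and> insert x S \<in> H} \<le> card {y, z}" by (rule card_mono[OF _ Xsub]) simp
  also have "\<dots> \<le> 2" by (simp add: card_insert_if)
  finally show False using X3 by simp
qed

lemma decomp:
  "H \<subseteq> star U \<union> (\<Union>R\<in>RR. \<Union>u\<in>U. insert (insert u R) ((\<lambda>x. (R - {x}) \<union> (U - {u})) ` R))"
proof
  fix E assume E: "E \<in> H"
  have ne: "E \<inter> U \<noteq> {}" using coverU E unfolding cover_def by blast
  have fEU: "finite (E \<inter> U)" using finU by simp
  have le3: "card (E \<inter> U) \<le> 3" using card_mono[OF finU, of "E \<inter> U"] cardU by simp
  have c0: "card (E \<inter> U) \<noteq> 0" using ne fEU by simp
  consider (c3) "card (E \<inter> U) = 3" | (c1) "card (E \<inter> U) = 1" | (c2) "card (E \<inter> U) = 2"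
    using le3 c0 by linarith
  then show "E \<in> star U \<union> (\<Union>R\<in>RR. \<Union>u\<in>U. insert (insert u R) ((\<lambda>x. (R - {x}) \<union> (U - {u})) ` R))"
  proof cases
    case c3
    have "E \<inter> U = U" using card_seteq[OF finU _ ] c3 cardU by (metis Int_lower2 order_refl)
    then have "E \<in> star U" unfolding star_def using E by blast
    then show ?thesis by blast
  next
    case c1
    then obtain u where u: "E \<inter> U = {u}" by (auto simp: card_1_singleton_iff)
    have R: "E - {u} \<in> RR" by (rule C_lemma[OF E u])
    have "E = insert u (E - {u})" using u by blast
    moreover have "u \<in> U" using u by blast
    ultimately show ?thesis using R by blast
  next
    case c2
    have "card (U - (E \<inter> U)) = 1" using card_Diff_subset[OF fEU] c2 cardU by simp
    then obtain u where u: "U - (E \<inter> U) = {u}" by (auto simp: card_1_singleton_iff)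
    have EU: "E \<inter> U = U - {u}" using u by blast
    obtain x where x: "x \<notin> E - U" "insert x (E - U) \<in> RR" using H2_lemma[OF E c2] by blast
    define R where "R = insert x (E - U)"
    have "E = (R - {x}) \<union> (U - {u})" unfolding R_def using x(1) EU by blast
    then have "E \<in> (\<lambda>x. (R - {x}) \<union> (U - {u})) ` R" unfolding R_def by blast
    moreover have "u \<in> U" using u by blast
    ultimately show ?thesis using x(2) unfolding R_def by blast
  qed
qed

lemma cardH_RR: "card H \<le> ((n - 3) choose (r - 3)) + card RR * (3 * r)"
proof -
  let ?B = "\<Union>R\<in>RR. \<Union>u\<in>U. insert (insert u R) ((\<lambda>x. (R - {x}) \<union> (U - {u})) ` R)"
  have finB: "finite ?B" using finRR finU RR_props(2) by auto
  have finS: "finite (star U)" unfolding star_def using finH by simp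
  have "card H \<le> card (star U \<union> ?B)" by (rule card_mono[OF _ decomp]) (use finB finS in simp)
  also have "\<dots> \<le> card (star U) + card ?B" by (rule card_Un_le)
  also have "card (star U) \<le> (n - 3) choose (r - 3)" by (rule star_card3[OF cardU])
  also have "card ?B \<le> card RR * (3 * r)"
  proof (rule card_UN_le_mult[OF finRR])
    fix R assume R: "R \<in> RR"
    have fR: "finite R" and cR: "card R = r - 1" using RR_props[OF R] by blast+
    have "card (\<Union>u\<in>U. insert (insert u R) ((\<lambda>x. (R - {x}) \<union> (U - {u})) ` R)) \<le> card U * r"
    proof (rule card_UN_le_mult[OF finU])
      fix u assume "u \<in> U"
      have "card (insert (insert u R) ((\<lambda>x. (R - {x}) \<union> (U - {u})) ` R)) \<le> card ((\<lambda>x. (R - {x}) \<union> (U - {u})) ` R) + 1"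
        by (rule card_insert_le1) (use fR in simp)
      also have "card ((\<lambda>x. (R - {x}) \<union> (U - {u})) ` R) \<le> card R" by (rule card_image_le[OF fR])
      finally show "card (insert (insert u R) ((\<lambda>x. (R - {x}) \<union> (U - {u})) ` R)) \<le> r" using cR r3 by simp
    qed
    then show "card (\<Union>u\<in>U. insert (insert u R) ((\<lambda>x. (R - {x}) \<union> (U - {u})) ` R)) \<le> 3 * r" using cardU by simp
  qed
  finally show ?thesis by simp
qed

lemma RR_3card:
  assumes T: "card T = 3"
  shows "card {R\<in>RR. T \<subseteq> R} \<le> Mb"
proof (cases "r \<ge> 4")
  case False
  have e: "{R\<in>RR. T \<subseteq> R} = {}"
  proof (rule ccontr)
    assume "{R\<in>RR. T \<subseteq> R} \<noteq> {}"
    then obtain R where R: "R \<in> RR" "T \<subseteq> R" by blast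
    then have "card T \<le> card R" using RR_props(2)[OF R(1)] card_mono by blast
    then show False using T False RR_props(3)[OF R(1)] by simp
  qed
  show ?thesis unfolding e by simp
next
  case True
  have "{R\<in>RR. T \<subseteq> R} \<subseteq> {E. E \<subseteq> V \<and> card E = r - 1 \<and> T \<subseteq> E}" using RR_props by blast
  then have "card {R\<in>RR. T \<subseteq> R} \<le> card {E. E \<subseteq> V \<and> card E = r - 1 \<and> T \<subseteq> E}"
    by (rule card_mono[rotated]) (rule finite_subset[of _ "Pow V"], use finV in auto)
  also have "\<dots> \<le> (n - 3) choose (r - 1 - 3)" using supersets_card_le[OF finV, of "r - 1" T] T cardV by simp
  also have "r - 1 - 3 = r - 4" by simp
  finally show ?thesis using True by (simp add: Mb_def)
qed

lemma RR_small:
  assumes ne: "RR \<noteq> {}" and nc: "\<not>(\<exists>d e. d \<noteq> e \<and> (\<forall>R\<in>RR. d \<in> R \<and> e \<in> R))"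
  shows "card RR \<le> r ^ 3 * Mb"
proof -
  obtain R0 where R0: "R0 \<in> RR" using ne by blast
  have cRr: "card R \<le> r" "finite R" if "R \<in> RR" for R using RR_props[OF that] by auto
  have tri: "card {R\<in>RR. {y, z, w} \<subseteq> R} \<le> Mb" if "y \<noteq> z" "w \<noteq> y" "w \<noteq> z" for y z w
    by (rule RR_3card) (use that in simp)
  have fsub: "finite {R\<in>RR. T \<subseteq> R}" for T using finRR by simp
  show ?thesis
  proof (cases "\<exists>k. \<forall>R\<in>RR. k \<in> R")
    case True
    then obtain k where k: "\<forall>R\<in>RR. k \<in> R" by blast
    have notall0: "\<exists>R\<in>RR. z \<notin> R" if zk: "z \<noteq> k" for z
    proof (rule ccontr)
      assume neg: "\<not> (\<exists>R\<in>RR. z \<notin> R)"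
      have "\<forall>R\<in>RR. z \<in> R \<and> k \<in> R"
      proof
        fix R assume "R \<in> RR"
        then show "z \<in> R \<and> k \<in> R" using neg k by blast
      qed
      then have "\<exists>d e. d \<noteq> e \<and> (\<forall>R\<in>RR. d \<in> R \<and> e \<in> R)" using zk by blast
      then show False using nc by blast
    qed
    have notall: "\<forall>z. \<exists>R. z \<noteq> k \<longrightarrow> R \<in> RR \<and> z \<notin> R" using notall0 by blast
    then obtain R1 where R1: "\<forall>z. z \<noteq> k \<longrightarrow> R1 z \<in> RR \<and> z \<notin> R1 z"
      using choice[of "\<lambda>z R. z \<noteq> k \<longrightarrow> R \<in> RR \<and> z \<notin> R"] by blast
    have A1: "(R - {k}) \<inter> R' \<noteq> {}" if R: "R \<in> RR" and R': "R' \<in> RR" for R R'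
    proof
      assume dis: "(R - {k}) \<inter> R' = {}"
      have kR: "k \<in> R" by (rule bspec[OF k R])
      have ex: "\<exists>x. x \<notin> R \<and> insert x (R - {k}) \<in> RR \<and> x \<noteq> k"
        by (rule iii[OF R kR R' dis])
      then obtain x where x: "x \<notin> R" "insert x (R - {k}) \<in> RR" "x \<noteq> k" by blast
      have "k \<in> insert x (R - {k})" by (rule bspec[OF k x(2)])
      then show False using x(3) by blast
    qed
    have sub: "RR \<subseteq> (\<Union>z\<in>R0 - {k}. \<Union>w\<in>R1 z - {k}. {R\<in>RR. {k, z, w} \<subseteq> R})"
    proof
      fix R assume R: "R \<in> RR"
      obtain z where z: "z \<in> R0" "z \<noteq> k" "z \<in> R" using A1[OF R0 R] by blast
      have R1z: "R1 z \<in> RR" "z \<notin> R1 z" using R1 z(2) by blast+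
      obtain w where w: "w \<in> R" "w \<noteq> k" "w \<in> R1 z" using A1[OF R R1z(1)] by blast
      show "R \<in> (\<Union>z\<in>R0 - {k}. \<Union>w\<in>R1 z - {k}. {R\<in>RR. {k, z, w} \<subseteq> R})"
        using z w R k by blast
    qed
    have "card (\<Union>z\<in>R0 - {k}. \<Union>w\<in>R1 z - {k}. {R\<in>RR. {k, z, w} \<subseteq> R}) \<le> card (R0 - {k}) * (r * Mb)"
    proof (rule card_UN_le_mult)
      show "finite (R0 - {k})" using cRr(2)[OF R0] by simp
      fix z assume z: "z \<in> R0 - {k}"
      have R1z: "R1 z \<in> RR" "z \<notin> R1 z" using R1 z by blast+
      have "card (\<Union>w\<in>R1 z - {k}. {R\<in>RR. {k, z, w} \<subseteq> R}) \<le> card (R1 z - {k}) * Mb"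
      proof (rule card_UN_le_mult)
        show "finite (R1 z - {k})" using cRr(2)[OF R1z(1)] by simp
        fix w assume w: "w \<in> R1 z - {k}"
        show "card {R\<in>RR. {k, z, w} \<subseteq> R} \<le> Mb" by (rule tri) (use z w R1z in auto)
      qed
      also have "\<dots> \<le> r * Mb" using card_Diff1_le[of "R1 z" k] cRr[OF R1z(1)] by (intro mult_le_mono1) simp
      finally show "card (\<Union>w\<in>R1 z - {k}. {R\<in>RR. {k, z, w} \<subseteq> R}) \<le> r * Mb" .
    qed
    also have "\<dots> \<le> r * (r * Mb)" using card_Diff1_le[of R0 k] cRr[OF R0] by (intro mult_le_mono1) simp
    also have "\<dots> \<le> r * (r * (r * Mb))"
    proof -
      have "r * Mb \<le> r * (r * Mb)" using r3 by simp
      then show ?thesis by (rule mult_le_mono2)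
    qed
    finally have "card (\<Union>z\<in>R0 - {k}. \<Union>w\<in>R1 z - {k}. {R\<in>RR. {k, z, w} \<subseteq> R}) \<le> r ^ 3 * Mb"
      by (simp add: eval_nat_numeral algebra_simps)
    moreover have "finite (\<Union>z\<in>R0 - {k}. \<Union>w\<in>R1 z - {k}. {R\<in>RR. {k, z, w} \<subseteq> R})"
      by (rule finite_subset[OF _ finRR]) blast
    ultimately show ?thesis using card_mono[OF _ sub] by linarith
  next
    case False
    then have nk: "\<forall>y. \<exists>R. R \<in> RR \<and> y \<notin> R" by blast
    then obtain R1 where R1: "\<forall>y. R1 y \<in> RR \<and> y \<notin> R1 y"
      using choice[of "\<lambda>y R. R \<in> RR \<and> y \<notin> R"] by blast
    have Cex: "\<forall>p. \<exists>C. fst p \<noteq> snd p \<longrightarrow> (finite C \<and> card C \<le> r \<and> C \<inter> {fst p, snd p} = {} \<and>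
                 (\<forall>R\<in>RR. fst p \<in> R \<longrightarrow> snd p \<in> R \<longrightarrow> C \<inter> R \<noteq> {}))"
    proof
      fix p :: "'a \<times> 'a"
      obtain y z where p: "p = (y, z)" by (cases p)
      show "\<exists>C. fst p \<noteq> snd p \<longrightarrow> (finite C \<and> card C \<le> r \<and> C \<inter> {fst p, snd p} = {} \<and>
                 (\<forall>R\<in>RR. fst p \<in> R \<longrightarrow> snd p \<in> R \<longrightarrow> C \<inter> R \<noteq> {}))"
      proof (cases "\<exists>R2\<in>RR. R2 \<inter> {y, z} = {}")
        case True
        then obtain R2 where R2: "R2 \<in> RR" "R2 \<inter> {y, z} = {}" by blast
        have "finite R2 \<and> card R2 \<le> r \<and> R2 \<inter> {y, z} = {} \<and> (\<forall>R\<in>RR. y \<in> R \<longrightarrow> z \<in> R \<longrightarrow> R2 \<inter> R \<noteq> {})"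
          using R2 cRr[OF R2(1)] RR_inter[OF R2(1)] by blast
        then show ?thesis unfolding p by (intro exI[of _ R2]) simp
      next
        case False
        then have cov: "\<forall>R\<in>RR. R \<inter> {y, z} \<noteq> {}" by blast
        obtain R' where R': "R' \<in> RR" "z \<notin> R'" using nk by blast
        have yR': "y \<in> R'" using cov R' by blast
        have meet: "(R' - {y}) \<inter> R \<noteq> {}" if R: "R \<in> RR" for R
        proof
          assume dis: "(R' - {y}) \<inter> R = {}"
          obtain x where x: "x \<notin> R'" "insert x (R' - {y}) \<in> RR" "x \<noteq> z"
            using iii[OF R'(1) yR' R dis, of z] by blast
          have "insert x (R' - {y}) \<inter> {y, z} \<noteq> {}" using cov x(2) by blast
          then show False using x yR' R'(2) by blast
        qed
        have "finite (R' - {y}) \<and> card (R' - {y}) \<le> r \<and> (R' - {y}) \<inter> {y, z} = {} \<and>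
             (\<forall>R\<in>RR. y \<in> R \<longrightarrow> z \<in> R \<longrightarrow> (R' - {y}) \<inter> R \<noteq> {})"
          using cRr[OF R'(1)] card_Diff1_le[of R' y] R'(2) meet by auto
        then show ?thesis unfolding p by (intro exI[of _ "R' - {y}"]) (use R'(2) in simp)
      qed
    qed
    then obtain Cf where Cf0: "\<forall>p. fst p \<noteq> snd p \<longrightarrow> (finite (Cf p) \<and> card (Cf p) \<le> r \<and> Cf p \<inter> {fst p, snd p} = {} \<and>
                 (\<forall>R\<in>RR. fst p \<in> R \<longrightarrow> snd p \<in> R \<longrightarrow> Cf p \<inter> R \<noteq> {}))"
      using choice[of "\<lambda>p C. fst p \<noteq> snd p \<longrightarrow> (finite C \<and> card C \<le> r \<and> C \<inter> {fst p, snd p} = {} \<and>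
                 (\<forall>R\<in>RR. fst p \<in> R \<longrightarrow> snd p \<in> R \<longrightarrow> C \<inter> R \<noteq> {}))"] by blast
    have Cf: "finite (Cf (y, z))" "card (Cf (y, z)) \<le> r" "Cf (y, z) \<inter> {y, z} = {}"
      "\<And>R. R \<in> RR \<Longrightarrow> y \<in> R \<Longrightarrow> z \<in> R \<Longrightarrow> Cf (y, z) \<inter> R \<noteq> {}"
      if "y \<noteq> z" for y z using Cf0[rule_format, of "(y, z)"] that by auto
    have sub: "RR \<subseteq> (\<Union>y\<in>R0. \<Union>z\<in>R1 y. \<Union>w\<in>Cf (y, z). {R\<in>RR. {y, z, w} \<subseteq> R})"
    proof
      fix R assume R: "R \<in> RR"
      obtain y where y: "y \<in> R0" "y \<in> R" using RR_inter[OF R0 R] by blast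
      have R1y: "R1 y \<in> RR" "y \<notin> R1 y" using R1 by blast+
      obtain z where z: "z \<in> R1 y" "z \<in> R" using RR_inter[OF R1y(1) R] by blast
      have yz: "y \<noteq> z" using z R1y by blast
      obtain w where w: "w \<in> Cf (y, z)" "w \<in> R" using Cf(4)[OF yz R y(2) z(2)] by blast
      show "R \<in> (\<Union>y\<in>R0. \<Union>z\<in>R1 y. \<Union>w\<in>Cf (y, z). {R\<in>RR. {y, z, w} \<subseteq> R})"
        using y z w R by blast
    qed
    have "card (\<Union>y\<in>R0. \<Union>z\<in>R1 y. \<Union>w\<in>Cf (y, z). {R\<in>RR. {y, z, w} \<subseteq> R}) \<le> card R0 * (r * (r * Mb))"
    proof (rule card_UN_le_mult)
      show "finite R0" using cRr[OF R0] by simp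
      fix y assume y: "y \<in> R0"
      have R1y: "R1 y \<in> RR" "y \<notin> R1 y" using R1 by blast+
      have "card (\<Union>z\<in>R1 y. \<Union>w\<in>Cf (y, z). {R\<in>RR. {y, z, w} \<subseteq> R}) \<le> card (R1 y) * (r * Mb)"
      proof (rule card_UN_le_mult)
        show "finite (R1 y)" using cRr[OF R1y(1)] by simp
        fix z assume z: "z \<in> R1 y"
        have yz: "y \<noteq> z" using z R1y by blast
        have "card (\<Union>w\<in>Cf (y, z). {R\<in>RR. {y, z, w} \<subseteq> R}) \<le> card (Cf (y, z)) * Mb"
        proof (rule card_UN_le_mult)
          show "finite (Cf (y, z))" using Cf(1)[OF yz] .
          fix w assume w: "w \<in> Cf (y, z)"
          show "card {R\<in>RR. {y, z, w} \<subseteq> R} \<le> Mb" by (rule tri) (use yz w Cf(3)[OF yz] in auto)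
        qed
        also have "\<dots> \<le> r * Mb" using Cf(2)[OF yz] by (rule mult_le_mono1)
        finally show "card (\<Union>w\<in>Cf (y, z). {R\<in>RR. {y, z, w} \<subseteq> R}) \<le> r * Mb" .
      qed
      also have "\<dots> \<le> r * (r * Mb)" using cRr(1)[OF R1y(1)] by (rule mult_le_mono1)
      finally show "card (\<Union>z\<in>R1 y. \<Union>w\<in>Cf (y, z). {R\<in>RR. {y, z, w} \<subseteq> R}) \<le> r * (r * Mb)" .
    qed
    also have "\<dots> \<le> r * (r * (r * Mb))" using cRr(1)[OF R0] by (rule mult_le_mono1)
    finally have "card (\<Union>y\<in>R0. \<Union>z\<in>R1 y. \<Union>w\<in>Cf (y, z). {R\<in>RR. {y, z, w} \<subseteq> R}) \<le> r ^ 3 * Mb"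
      by (simp add: eval_nat_numeral algebra_simps)
    moreover have "finite (\<Union>y\<in>R0. \<Union>z\<in>R1 y. \<Union>w\<in>Cf (y, z). {R\<in>RR. {y, z, w} \<subseteq> R})"
      by (rule finite_subset[OF _ finRR]) blast
    ultimately show ?thesis using card_mono[OF _ sub] by linarith
  qed
qed

lemma kernel_case:
  assumes ne: "RR \<noteq> {}" and de: "d \<noteq> e" "\<forall>R\<in>RR. d \<in> R \<and> e \<in> R"
  shows "\<exists>X. X \<subseteq> V \<and> card X = 5 \<and> (\<forall>E\<in>H. 3 \<le> card (E \<inter> X))"
proof -
  obtain R0 where R0: "R0 \<in> RR" using ne by blast
  have deV: "d \<in> V" "e \<in> V" "d \<notin> U" "e \<notin> U" using de(2) R0 RR_props[OF R0] by blast+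
  define X where "X = U \<union> {d, e}"
  have XV: "X \<subseteq> V" unfolding X_def using UV deV by blast
  have cX: "card X = 5" unfolding X_def using card_Un_disjoint[OF finU, of "{d, e}"] deV de(1) cardU by simp
  have fX: "finite X" unfolding X_def using finU by simp
  have "3 \<le> card (E \<inter> X)" if E: "E \<in> H" for E
  proof -
    have fEX: "finite (E \<inter> X)" using fX by simp
    have mem: "E \<in> star U \<union> (\<Union>R\<in>RR. \<Union>u\<in>U. insert (insert u R) ((\<lambda>x. (R - {x}) \<union> (U - {u})) ` R))"
      by (rule subsetD[OF decomp E])
    have wex: "\<exists>w. w \<in> R - {x} \<and> w \<in> {d, e}" if "R \<in> RR" for R x
    proof -
      have dR: "d \<in> R" "e \<in> R" using de(2) that by blast+
      show ?thesis
      proof (cases "x = d")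
        case True
        then have "e \<in> R - {x}" using dR de(1) by blast
        then show ?thesis by blast
      next
        case False
        then have "d \<in> R - {x}" using dR by blast
        then show ?thesis by blast
      qed
    qed
    show ?thesis
    proof (cases "E \<in> star U")
      case True
      then have "U \<subseteq> E" unfolding star_def by blast
      then have "U \<subseteq> E \<inter> X" unfolding X_def by blast
      then have "card U \<le> card (E \<inter> X)" by (rule card_mono[OF fEX])
      then show ?thesis by (simp add: cardU)
    next
      case False
      have "E \<in> (\<Union>R\<in>RR. \<Union>u\<in>U. insert (insert u R) ((\<lambda>x. (R - {x}) \<union> (U - {u})) ` R))"
        by (rule un_not[OF mem False])
      then obtain R where R: "R \<in> RR" "E \<in> (\<Union>u\<in>U. insert (insert u R) ((\<lambda>x. (R - {x}) \<union> (U - {u})) ` R))"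
        by (rule UN_E)
      from R(2) obtain u where u: "u \<in> U" "E \<in> insert (insert u R) ((\<lambda>x. (R - {x}) \<union> (U - {u})) ` R)"
        by (rule UN_E)
      show ?thesis
      proof (cases "E = insert u R")
        case True
        have dR: "d \<in> R" "e \<in> R" using de(2) R(1) by blast+
        have ud: "u \<noteq> d" "u \<noteq> e" using u(1) deV by blast+
        have "{u, d, e} \<subseteq> E \<inter> X" unfolding True X_def using dR u(1) by blast
        then have c: "card {u, d, e} \<le> card (E \<inter> X)" by (rule card_mono[OF fEX])
        have "card {u, d, e} = 3" using ud de(1) by simp
        then show ?thesis using c by simp
      next
        case False
        have "E \<in> (\<lambda>x. (R - {x}) \<union> (U - {u})) ` R" by (rule ins_not[OF u(2) False])
        then obtain x where x: "x \<in> R" "E = (R - {x}) \<union> (U - {u})" by (rule imageE) (rule that)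
        obtain w where w0: "w \<in> R - {x}" "w \<in> {d, e}" using wex[OF R(1)] by blast
        have wU: "w \<notin> U" using w0 deV by blast
        have "insert w (U - {u}) \<subseteq> E \<inter> X" unfolding x(2) using w0 unfolding X_def by blast
        then have c: "card (insert w (U - {u})) \<le> card (E \<inter> X)" by (rule card_mono[OF fEX])
        have "card (insert w (U - {u})) = 3" using wU u(1) cardU finU by simp
        then show ?thesis using c by simp
      qed
    qed
  qed
  then show ?thesis using XV cX by blast
qed

end

context hg
begin

lemma main_structure:
  assumes nb: "n \<ge> 2 * r ^ 5" and big: "card H \<ge> 10 * ((n - 5) choose (r - 3))"
  shows "\<exists>X. X \<subseteq> V \<and> card X = 5 \<and> (\<forall>E\<in>H. 3 \<le> card (E \<inter> X))"
proof (rule ccontr)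
  assume nX: "\<not> ?thesis"
  have ar: "((n - 3) choose (r - 3)) + 3 * r ^ 4 * Mb < 10 * ((n - 5) choose (r - 3))"
    using arith_main[OF r3 nb] unfolding Mb_def .
  show False
  proof (cases "\<exists>U. cover U \<and> card U = 3")
    case False
    have "card H \<le> r ^ 4 * Mb" by (rule tau4[OF False])
    then show False using ar big by linarith
  next
    case True
    then obtain U where U: "cover U" "card U = 3" by blast
    interpret h3: hg3 V H r n U by unfold_locales (use U in auto)
    have cRR: "card h3.RR \<le> r ^ 3 * Mb"
    proof (cases "h3.RR = {}")
      case True then show ?thesis by simp
    next
      case False
      have "\<not>(\<exists>d e. d \<noteq> e \<and> (\<forall>R\<in>h3.RR. d \<in> R \<and> e \<in> R))"
        using h3.kernel_case[OF False] nX by blast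
      then show ?thesis by (rule h3.RR_small[OF False])
    qed
    have "card H \<le> ((n - 3) choose (r - 3)) + card h3.RR * (3 * r)" by (rule h3.cardH_RR)
    also have "card h3.RR * (3 * r) \<le> r ^ 3 * Mb * (3 * r)" using cRR by (rule mult_le_mono1)
    also have "r ^ 3 * Mb * (3 * r) = 3 * r ^ 4 * Mb" by (simp add: eval_nat_numeral algebra_simps)
    finally show False using ar big by linarith
  qed
qed

end


lemma codeg_from_mpc:
  assumes unif: "uniform_hypergraph V r H" and finV: "finite V" and mpc: "min_pos_codegree r H \<ge> 3"
    and r3: "r \<ge> 3"
  shows "H \<noteq> {}"
    and "\<And>S E. E \<in> H \<Longrightarrow> S \<subseteq> E \<Longrightarrow> card S = r - 1 \<Longrightarrow> 3 \<le> card {x. x \<notin> S \<and> insert x S \<in> H}"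
proof -
  show Hne: "H \<noteq> {}" using mpc unfolding min_pos_codegree_def by (cases "H = {}") auto
  have edge: "E \<subseteq> V" "card E = r" if "E \<in> H" for E using unif that unfolding uniform_hypergraph_def by blast+
  have finH: "finite H" by (rule finite_subset[of _ "Pow V"]) (use edge finV in auto)
  define P where "P = (\<lambda>k. \<forall>S. card S = r - 1 \<and> (\<exists>E\<in>H. S \<subseteq> E) \<longrightarrow> card {E\<in>H. S \<subseteq> E} \<ge> k)"
  obtain E0 where E0: "E0 \<in> H" using Hne by blast
  have fE0: "finite E0" using edge(1)[OF E0] finV finite_subset by blast
  have le0: "r - 1 \<le> card E0" using edge(2)[OF E0] by simp
  obtain S0 where S0: "S0 \<subseteq> E0" "card S0 = r - 1" "finite S0" by (rule obtain_subset_with_card_n[OF le0])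
  have bound: "y \<le> card {E\<in>H. S0 \<subseteq> E}" if "P y" for y using that S0 E0 unfolding P_def by blast
  have P0: "P 0" unfolding P_def by simp
  have PG: "P (Greatest P)" by (rule GreatestI_nat[of P 0 "card {E\<in>H. S0 \<subseteq> E}", OF P0 bound])
  have mG: "min_pos_codegree r H = Greatest P" unfolding min_pos_codegree_def P_def by (simp only: Hne if_False)
  have G3: "Greatest P \<ge> 3" using mpc mG by simp
  fix S E assume E: "E \<in> H" and SE: "S \<subseteq> E" and cS: "card S = r - 1"
  have "Greatest P \<le> card {F\<in>H. S \<subseteq> F}" using PG E SE cS unfolding P_def by blast
  then have c3: "3 \<le> card {F\<in>H. S \<subseteq> F}" using G3 by linarith
  have fE: "finite E" using edge(1)[OF E] finV finite_subset by blast
  have fS: "finite S" using fE SE finite_subset by blast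
  have sub: "{F\<in>H. S \<subseteq> F} \<subseteq> (\<lambda>x. insert x S) ` {x. x \<notin> S \<and> insert x S \<in> H}"
  proof
    fix F assume F: "F \<in> {F\<in>H. S \<subseteq> F}"
    then have FH: "F \<in> H" and SF: "S \<subseteq> F" by blast+
    have fF: "finite F" using edge(1)[OF FH] finV finite_subset by blast
    have "card (F - S) = 1" using card_Diff_subset[OF fS SF] edge(2)[OF FH] cS r3 by simp
    then obtain x where x: "F - S = {x}" by (auto simp: card_1_singleton_iff)
    have "F = insert x S" using x SF by blast
    moreover have "x \<notin> S" using x by blast
    ultimately show "F \<in> (\<lambda>x. insert x S) ` {x. x \<notin> S \<and> insert x S \<in> H}" using FH by blast
  qed
  have finX: "finite {x. x \<notin> S \<and> insert x S \<in> H}"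
    by (rule finite_subset[of _ V]) (use edge finV in auto)
  have "card {F\<in>H. S \<subseteq> F} \<le> card ((\<lambda>x. insert x S) ` {x. x \<notin> S \<and> insert x S \<in> H})"
    by (rule card_mono[OF _ sub]) (use finX in simp)
  also have "\<dots> \<le> card {x. x \<notin> S \<and> insert x S \<in> H}" by (rule card_image_le[OF finX])
  finally show "3 \<le> card {x. x \<notin> S \<and> insert x S \<in> H}" using c3 by simp
qed

lemma K_card_lower:
  assumes finV: "finite V" and cardV: "card V = n" and XV: "X \<subseteq> V" and cX: "card X = 5" and r3: "r \<ge> 3"
  shows "10 * ((n - 5) choose (r - 3)) \<le> card {E. E \<subseteq> V \<and> card E = r \<and> 3 \<le> card (E \<inter> X)}"
proof -
  let ?K = "{E. E \<subseteq> V \<and> card E = r \<and> 3 \<le> card (E \<inter> X)}"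
  let ?P = "{A. A \<subseteq> X \<and> card A = 3}" and ?Q = "{B. B \<subseteq> V - X \<and> card B = r - 3}"
  have fX: "finite X" using finV XV finite_subset by blast
  have cP: "card ?P = 10" using n_subsets[OF fX, of 3] cX by (simp add: numeral_eq_Suc)
  have cQ: "card ?Q = (n - 5) choose (r - 3)" using n_subsets[of "V - X" "r - 3"] finV cardV cX XV fX
    by (simp add: card_Diff_subset)
  have fK: "finite ?K" by (rule finite_subset[of _ "Pow V"]) (use finV in auto)
  have inj: "inj_on (\<lambda>(A, B). A \<union> B) (?P \<times> ?Q)"
  proof (rule inj_onI)
    fix p q assume p: "p \<in> ?P \<times> ?Q" and q: "q \<in> ?P \<times> ?Q" and e: "(\<lambda>(A, B). A \<union> B) p = (\<lambda>(A, B). A \<union> B) q"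
    obtain A B where pAB: "p = (A, B)" by (cases p)
    obtain A' B' where qAB: "q = (A', B')" by (cases q)
    have e': "A \<union> B = A' \<union> B'" using e pAB qAB by simp
    have "A = (A \<union> B) \<inter> X" "A' = (A' \<union> B') \<inter> X" "B = (A \<union> B) - X" "B' = (A' \<union> B') - X"
      using p q pAB qAB by auto
    then show "p = q" using e' pAB qAB by metis
  qed
  have img: "(\<lambda>(A, B). A \<union> B) ` (?P \<times> ?Q) \<subseteq> ?K"
  proof
    fix E assume "E \<in> (\<lambda>(A, B). A \<union> B) ` (?P \<times> ?Q)"
    then obtain A B where AB: "A \<in> ?P" "B \<in> ?Q" "E = A \<union> B" by blast
    have fA: "finite A" using AB(1) fX finite_subset by blast
    have fB: "finite B" using AB(2) finV finite_subset by blast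
    have dAB: "A \<inter> B = {}" using AB by blast
    have "card E = r" using AB card_Un_disjoint[OF fA fB dAB] r3 by simp
    moreover have "E \<inter> X = A" using AB by blast
    moreover have "E \<subseteq> V" using AB XV by blast
    ultimately show "E \<in> ?K" using AB(1) by simp
  qed
  have "10 * ((n - 5) choose (r - 3)) = card (?P \<times> ?Q)" using cP cQ by (simp add: card_cartesian_product)
  also have "\<dots> = card ((\<lambda>(A, B). A \<union> B) ` (?P \<times> ?Q))" using card_image[OF inj] by simp
  also have "\<dots> \<le> card ?K" by (rule card_mono[OF fK img])
  finally show ?thesis .
qed

lemma K_props:
  assumes finV: "finite V" and cardV: "card V = n" and XV: "X \<subseteq> V" and cX: "card X = 5" and r3: "r \<ge> 3"
    and nr: "n \<ge> r + 3"
  defines "K \<equiv> {E. E \<subseteq> V \<and> card E = r \<and> 3 \<le> card (E \<inter> X)}"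
  shows "uniform_hypergraph V r K" "intersecting K" "min_pos_codegree r K \<ge> 3" "finite K"
proof -
  show "uniform_hypergraph V r K" unfolding uniform_hypergraph_def K_def by blast
  have fX: "finite X" using finV XV finite_subset by blast
  show "intersecting K" unfolding intersecting_def
  proof (intro ballI)
    fix E F assume E: "E \<in> K" and F: "F \<in> K"
    have a: "3 \<le> card (E \<inter> X)" "3 \<le> card (F \<inter> X)" using E F unfolding K_def by blast+
    have "card ((E \<inter> X) \<union> (F \<inter> X)) \<le> 5" using card_mono[OF fX, of "(E \<inter> X) \<union> (F \<inter> X)"] cX by auto
    moreover have "card (E \<inter> X) + card (F \<inter> X) = card ((E \<inter> X) \<union> (F \<inter> X)) + card ((E \<inter> X) \<inter> (F \<inter> X))"
      by (rule card_Un_Int) (use fX in simp_all)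
    ultimately have "card ((E \<inter> X) \<inter> (F \<inter> X)) \<noteq> 0" using a by linarith
    then have "(E \<inter> X) \<inter> (F \<inter> X) \<noteq> {}" by (metis card.empty)
    then show "E \<inter> F \<noteq> {}" by blast
  qed
  show fK: "finite K" unfolding K_def by (rule finite_subset[of _ "Pow V"]) (use finV in auto)
  have n5: "n \<ge> 5" "r - 3 \<le> n - 5" using nr r3 by auto
  have "10 * ((n - 5) choose (r - 3)) \<le> card K" unfolding K_def by (rule K_card_lower[OF finV cardV XV cX r3])
  moreover have "(n - 5) choose (r - 3) > 0" using n5 by simp
  ultimately have Kne: "K \<noteq> {}" using fK by auto
  define P where "P = (\<lambda>k. \<forall>S. card S = r - 1 \<and> (\<exists>E\<in>K. S \<subseteq> E) \<longrightarrow> card {E\<in>K. S \<subseteq> E} \<ge> k)"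
  obtain E0 where E0: "E0 \<in> K" using Kne by blast
  have E0V: "E0 \<subseteq> V" "card E0 = r" using E0 unfolding K_def by blast+
  have le0: "r - 1 \<le> card E0" using E0V by simp
  obtain S0 where S0: "S0 \<subseteq> E0" "card S0 = r - 1" "finite S0" by (rule obtain_subset_with_card_n[OF le0])
  have bound: "y \<le> card K" if "P y" for y
  proof -
    have "y \<le> card {E\<in>K. S0 \<subseteq> E}" using that S0 E0 unfolding P_def by blast
    also have "\<dots> \<le> card K" by (rule card_mono[OF fK]) blast
    finally show ?thesis .
  qed
  have P3: "P 3" unfolding P_def
  proof (intro allI impI)
    fix S assume "card S = r - 1 \<and> (\<exists>E\<in>K. S \<subseteq> E)"
    then obtain E where cS: "card S = r - 1" and E: "E \<in> K" and SE: "S \<subseteq> E" by blast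
    have EV: "E \<subseteq> V" "card E = r" "3 \<le> card (E \<inter> X)" using E unfolding K_def by blast+
    have fE: "finite E" using EV finV finite_subset by blast
    have fS: "finite S" using fE SE finite_subset by blast
    have SV: "S \<subseteq> V" using SE EV by blast
    have cES: "card (E - S) = 1" using card_Diff_subset[OF fS SE] EV(2) cS r3 by simp
    have "E \<inter> X \<subseteq> (S \<inter> X) \<union> (E - S)" by blast
    then have "card (E \<inter> X) \<le> card ((S \<inter> X) \<union> (E - S))" by (rule card_mono[rotated]) (use fE fS in simp)
    also have "\<dots> \<le> card (S \<inter> X) + card (E - S)" by (rule card_Un_le)
    finally have c2: "card (S \<inter> X) \<ge> 2" using cES EV(3) by simp
    define Y where "Y = (if 3 \<le> card (S \<inter> X) then V - S else X - S)"
    have cY: "card Y \<ge> 3"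
    proof (cases "3 \<le> card (S \<inter> X)")
      case True
      then have "card Y = n - (r - 1)" unfolding Y_def using card_Diff_subset[OF fS SV] cardV cS by simp
      then show ?thesis using nr by simp
    next
      case False
      then have "card (S \<inter> X) = 2" using c2 by simp
      moreover have "card (X - S) = card X - card (X \<inter> S)" by (rule card_Diff_subset_Int) (use fX in simp)
      ultimately have "card (X - S) = 3" using cX by (simp add: Int_commute)
      then show ?thesis unfolding Y_def using False by simp
    qed
    have YK: "insert y S \<in> K" if y: "y \<in> Y" for y
    proof -
      have yS: "y \<notin> S" and yV: "y \<in> V" using y XV unfolding Y_def by (auto split: if_splits)
      have c: "card (insert y S) = r" using yS fS cS r3 by simp
      have "3 \<le> card (insert y S \<inter> X)"
      proof (cases "3 \<le> card (S \<inter> X)")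
        case True
        have "card (S \<inter> X) \<le> card (insert y S \<inter> X)" by (rule card_mono) (use fX in auto)
        then show ?thesis using True by simp
      next
        case False
        then have yX: "y \<in> X" using y unfolding Y_def by simp
        have "insert y S \<inter> X = insert y (S \<inter> X)" using yX by blast
        moreover have "card (insert y (S \<inter> X)) = card (S \<inter> X) + 1" using yS fS by simp
        ultimately show ?thesis using c2 by simp
      qed
      then show ?thesis unfolding K_def using c SV yV by simp
    qed
    have inj: "inj_on (\<lambda>y. insert y S) Y"
      by (rule inj_onI) (use Y_def in \<open>auto split: if_splits\<close>)
    have "(\<lambda>y. insert y S) ` Y \<subseteq> {E\<in>K. S \<subseteq> E}" using YK by blast
    then have "card ((\<lambda>y. insert y S) ` Y) \<le> card {E\<in>K. S \<subseteq> E}" by (rule card_mono[rotated]) (use fK in simp)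
    then show "3 \<le> card {E\<in>K. S \<subseteq> E}" using card_image[OF inj] cY by simp
  qed
  have "3 \<le> Greatest P" by (rule Greatest_le_nat[of P 3 "card K", OF P3 bound])
  moreover have "min_pos_codegree r K = Greatest P" unfolding min_pos_codegree_def P_def by (simp only: Kne if_False)
  ultimately show "min_pos_codegree r K \<ge> 3" by simp
qed


theorem theorem9:
  fixes V :: "'a set" and H :: "'a set set" and r n :: nat
  assumes "r \<ge> 3"
    and "n \<ge> 2 * r ^ 5"
    and "finite V" and "card V = n"
    and "uniform_hypergraph V r H"
    and "intersecting H"
    and "min_pos_codegree r H \<ge> 3"
    and "\<forall>H'. uniform_hypergraph V r H' \<and> intersecting H' \<and> min_pos_codegree r H' \<ge> 3
              \<longrightarrow> card H' \<le> card H"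
  shows "kernel_system V r 3 H"
proof -
  have unifH: "\<forall>E\<in>H. E \<subseteq> V \<and> card E = r" using assms(5) unfolding uniform_hypergraph_def .
  have interH: "\<forall>E\<in>H. \<forall>F\<in>H. E \<inter> F \<noteq> {}" using assms(6) unfolding intersecting_def .
  have Hne: "H \<noteq> {}" by (rule codeg_from_mpc(1)[OF assms(5) assms(3) assms(7) assms(1)])
  have cg: "\<And>S E. E \<in> H \<Longrightarrow> S \<subseteq> E \<Longrightarrow> card S = r - 1 \<Longrightarrow> 3 \<le> card {x. x \<notin> S \<and> insert x S \<in> H}"
    by (rule codeg_from_mpc(2)[OF assms(5) assms(3) assms(7) assms(1)])
  interpret hg V H r n
    by unfold_locales (use assms(1,3,4) unifH interH Hne cg in auto)
  have r5: "r \<le> r ^ 5" using assms(1) by (simp add: self_le_power)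
  have nr: "n \<ge> r + 3" "5 \<le> n" using assms(1,2) r5 by linarith+
  have le5: "5 \<le> card V" using nr assms(4) by simp
  obtain X0 where X0: "X0 \<subseteq> V" "card X0 = 5" "finite X0" by (rule obtain_subset_with_card_n[OF le5])
  have K0: "uniform_hypergraph V r {E. E \<subseteq> V \<and> card E = r \<and> 3 \<le> card (E \<inter> X0)}"
    "intersecting {E. E \<subseteq> V \<and> card E = r \<and> 3 \<le> card (E \<inter> X0)}"
    "min_pos_codegree r {E. E \<subseteq> V \<and> card E = r \<and> 3 \<le> card (E \<inter> X0)} \<ge> 3"
    using K_props[OF assms(3) assms(4) X0(1) X0(2) assms(1) nr(1)] by blast+
  have "card {E. E \<subseteq> V \<and> card E = r \<and> 3 \<le> card (E \<inter> X0)} \<le> card H" using assms(8) K0 by blast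
  moreover have "10 * ((n - 5) choose (r - 3)) \<le> card {E. E \<subseteq> V \<and> card E = r \<and> 3 \<le> card (E \<inter> X0)}"
    by (rule K_card_lower[OF assms(3) assms(4) X0(1) X0(2) assms(1)])
  ultimately have big: "card H \<ge> 10 * ((n - 5) choose (r - 3))" by linarith
  obtain X where X: "X \<subseteq> V" "card X = 5" "\<forall>E\<in>H. 3 \<le> card (E \<inter> X)"
    using main_structure[OF assms(2) big] by blast
  define K where "K = {E. E \<subseteq> V \<and> card E = r \<and> 3 \<le> card (E \<inter> X)}"
  have Kp: "uniform_hypergraph V r K" "intersecting K" "min_pos_codegree r K \<ge> 3" "finite K"
    unfolding K_def using K_props[OF assms(3) assms(4) X(1) X(2) assms(1) nr(1)] by blast+
  have HK: "H \<subseteq> K" unfolding K_def using X(3) unifH by blast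
  have "card K \<le> card H" using assms(8) Kp by blast
  then have "H = K" using card_seteq[OF Kp(4) HK] by blast
  then show ?thesis unfolding kernel_system_def K_def using X(1,2) by auto
qed

end
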